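(* Let $\{\mathcal A_i\}_{i\ge1}$ be C*-algebras, $\alpha_1:\mathcal A_1\to\mathcal A_1$ a $*$-homomorphism, and $\beta_i:\mathcal A_i\to\mathcal A_{i+1}$ ($i\ge1$) $*$-isomorphisms. Define $\alpha_i:=\beta_{i-1}\circ\alpha_{i-1}\circ\beta_{i-1}^{-1}:\mathcal A_i\to\mathcal A_i$ for $i\ge2$, and $\varphi_i:=\beta_i\circ\alpha_i:\mathcal A_i\to\mathcal A_{i+1}$ for $i\ge1$. Then $\varphi_i=\alpha_{i+1}\circ\beta_i$ for all $i\ge1$, and the diagram consisting of the horizontal maps $\varphi_i$ (in two rows), the vertical maps $\alpha_i$ and the diagonal maps $\beta_i$ (from the $i$-th entry of the lower row to the $(i+1)$-th entry of the upper row) commutes; in particular $\varphi_i\circ\alpha_i=\alpha_{i+1}\circ\varphi_i$. Moreover, letting $\mathcal A_\infty$ be the inductive limit of $\mathcal A_1\xrightarrow{\varphi_1}\mathcal A_2\xrightarrow{\varphi_2}\cdots$ with canonical maps $\varphi_{\infty i}:\mathcal A_i\to\mathcal A_\infty$, the maps $\{\alpha_i\}$ and $\{\beta_i\}$ induce $*$-homomorphisms $\alpha_\infty,\beta_\infty:\mathcal A_\infty\to\mathcal A_\infty$, determined by $\alpha_\infty(\varphi_{\infty i}(a))=\varphi_{\infty i}(\alpha_i(a))$ and $\beta_\infty(\varphi_{\infty i}(a))=\varphi_{\infty,i+1}(\beta_i(a))$, which are inverses of each other. *)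

theory Defs
  imports Complex_Main
begin

record 'a cstar =
  cs_carrier :: "'a set"
  cs_zero :: 'a
  cs_add :: "'a \<Rightarrow> 'a \<Rightarrow> 'a"
  cs_scale :: "complex \<Rightarrow> 'a \<Rightarrow> 'a"
  cs_mult :: "'a \<Rightarrow> 'a \<Rightarrow> 'a"
  cs_star :: "'a \<Rightarrow> 'a"
  cs_norm :: "'a \<Rightarrow> real"

definition cs_diff :: "'a cstar \<Rightarrow> 'a \<Rightarrow> 'a \<Rightarrow> 'a" where
  "cs_diff A x y = cs_add A x (cs_scale A (-1) y)"

definition cstar_algebra :: "'a cstar \<Rightarrow> bool" where
  "cstar_algebra A \<longleftrightarrow>
    (let C = cs_carrier A; z = cs_zero A; ad = cs_add A; sc = cs_scale A;
         mu = cs_mult A; st = cs_star A; nm = cs_norm A in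
     \<comment> \<open>closure\<close>
     z \<in> C \<and>
     (\<forall>x\<in>C. \<forall>y\<in>C. ad x y \<in> C \<and> mu x y \<in> C) \<and>
     (\<forall>c. \<forall>x\<in>C. sc c x \<in> C) \<and> (\<forall>x\<in>C. st x \<in> C) \<and>
     \<comment> \<open>complex vector space\<close>
     (\<forall>x\<in>C. \<forall>y\<in>C. \<forall>w\<in>C. ad (ad x y) w = ad x (ad y w)) \<and>
     (\<forall>x\<in>C. \<forall>y\<in>C. ad x y = ad y x) \<and>
     (\<forall>x\<in>C. ad z x = x) \<and>
     (\<forall>x\<in>C. ad x (sc (-1) x) = z) \<and>
     (\<forall>x\<in>C. sc 1 x = x) \<and>
     (\<forall>a b. \<forall>x\<in>C. sc a (sc b x) = sc (a * b) x) \<and>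
     (\<forall>a b. \<forall>x\<in>C. sc (a + b) x = ad (sc a x) (sc b x)) \<and>
     (\<forall>a. \<forall>x\<in>C. \<forall>y\<in>C. sc a (ad x y) = ad (sc a x) (sc a y)) \<and>
     \<comment> \<open>associative algebra\<close>
     (\<forall>x\<in>C. \<forall>y\<in>C. \<forall>w\<in>C. mu (mu x y) w = mu x (mu y w)) \<and>
     (\<forall>x\<in>C. \<forall>y\<in>C. \<forall>w\<in>C. mu (ad x y) w = ad (mu x w) (mu y w)) \<and>
     (\<forall>x\<in>C. \<forall>y\<in>C. \<forall>w\<in>C. mu x (ad y w) = ad (mu x y) (mu x w)) \<and>
     (\<forall>a. \<forall>x\<in>C. \<forall>y\<in>C. mu (sc a x) y = sc a (mu x y) \<and> mu x (sc a y) = sc a (mu x y)) \<and>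
     \<comment> \<open>involution\<close>
     (\<forall>x\<in>C. st (st x) = x) \<and>
     (\<forall>x\<in>C. \<forall>y\<in>C. st (ad x y) = ad (st x) (st y)) \<and>
     (\<forall>a. \<forall>x\<in>C. st (sc a x) = sc (cnj a) (st x)) \<and>
     (\<forall>x\<in>C. \<forall>y\<in>C. st (mu x y) = mu (st y) (st x)) \<and>
     \<comment> \<open>norm\<close>
     (\<forall>x\<in>C. nm x \<ge> 0 \<and> (nm x = 0 \<longleftrightarrow> x = z)) \<and>
     (\<forall>x\<in>C. \<forall>y\<in>C. nm (ad x y) \<le> nm x + nm y) \<and>
     (\<forall>a. \<forall>x\<in>C. nm (sc a x) = cmod a * nm x) \<and>
     (\<forall>x\<in>C. \<forall>y\<in>C. nm (mu x y) \<le> nm x * nm y) \<and>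
     \<comment> \<open>C*-identity\<close>
     (\<forall>x\<in>C. nm (mu (st x) x) = nm x ^ 2) \<and>
     \<comment> \<open>completeness\<close>
     (\<forall>s. (\<forall>n. s n \<in> C) \<longrightarrow>
          (\<forall>e>0. \<exists>N. \<forall>m\<ge>N. \<forall>n\<ge>N. nm (cs_diff A (s m) (s n)) < e) \<longrightarrow>
          (\<exists>l\<in>C. (\<lambda>n. nm (cs_diff A (s n) l)) \<longlonglongrightarrow> 0)))"

text \<open>*-homomorphisms (only their behaviour on the carrier matters).\<close>

definition star_hom :: "'a cstar \<Rightarrow> 'b cstar \<Rightarrow> ('a \<Rightarrow> 'b) \<Rightarrow> bool" where
  "star_hom A B f \<longleftrightarrow>
    (\<forall>x\<in>cs_carrier A. f x \<in> cs_carrier B) \<and>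
    (\<forall>x\<in>cs_carrier A. \<forall>y\<in>cs_carrier A. f (cs_add A x y) = cs_add B (f x) (f y)) \<and>
    (\<forall>c. \<forall>x\<in>cs_carrier A. f (cs_scale A c x) = cs_scale B c (f x)) \<and>
    (\<forall>x\<in>cs_carrier A. \<forall>y\<in>cs_carrier A. f (cs_mult A x y) = cs_mult B (f x) (f y)) \<and>
    (\<forall>x\<in>cs_carrier A. f (cs_star A x) = cs_star B (f x))"

definition star_iso :: "'a cstar \<Rightarrow> 'b cstar \<Rightarrow> ('a \<Rightarrow> 'b) \<Rightarrow> bool" where
  "star_iso A B f \<longleftrightarrow> star_hom A B f \<and> bij_betw f (cs_carrier A) (cs_carrier B)"

text \<open>(L, psi) is an inductive limit of the sequence A 0 --phi 0--> A 1 --phi 1--> ...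
  in the category of C*-algebras, characterised by its universal property
  (tested against C*-algebras whose carrier lives in the ambient type of L).\<close>

definition inductive_limit ::
  "(nat \<Rightarrow> 'a cstar) \<Rightarrow> (nat \<Rightarrow> 'a \<Rightarrow> 'a) \<Rightarrow> 'b cstar \<Rightarrow> (nat \<Rightarrow> 'a \<Rightarrow> 'b) \<Rightarrow> bool" where
  "inductive_limit A phi L psi \<longleftrightarrow>
    cstar_algebra L \<and>
    (\<forall>i. star_hom (A i) L (psi i)) \<and>
    (\<forall>i. \<forall>a\<in>cs_carrier (A i). psi (Suc i) (phi i a) = psi i a) \<and>
    (\<forall>(B :: 'b cstar) chi. cstar_algebra B \<longrightarrow> (\<forall>i. star_hom (A i) B (chi i)) \<longrightarrow>
       (\<forall>i. \<forall>a\<in>cs_carrier (A i). chi (Suc i) (phi i a) = chi i a) \<longrightarrow>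
       (\<exists>f. star_hom L B f \<and> (\<forall>i. \<forall>a\<in>cs_carrier (A i). f (psi i a) = chi i a)) \<and>
       (\<forall>f g. star_hom L B f \<longrightarrow> star_hom L B g \<longrightarrow>
          (\<forall>i. \<forall>a\<in>cs_carrier (A i). f (psi i a) = chi i a) \<longrightarrow>
          (\<forall>i. \<forall>a\<in>cs_carrier (A i). g (psi i a) = chi i a) \<longrightarrow>
          (\<forall>x\<in>cs_carrier L. f x = g x)))"

text \<open>The maps alpha_i and phi_i of the paper (indices shifted: paper index i is index i-1 here).\<close>

fun alpha_seq :: "(nat \<Rightarrow> 'a cstar) \<Rightarrow> (nat \<Rightarrow> 'a \<Rightarrow> 'a) \<Rightarrow> ('a \<Rightarrow> 'a) \<Rightarrow> nat \<Rightarrow> 'a \<Rightarrow> 'a" where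
  "alpha_seq A beta alpha1 0 = alpha1"
| "alpha_seq A beta alpha1 (Suc i) =
     beta i \<circ> alpha_seq A beta alpha1 i \<circ> inv_into (cs_carrier (A i)) (beta i)"

definition phi_seq :: "(nat \<Rightarrow> 'a cstar) \<Rightarrow> (nat \<Rightarrow> 'a \<Rightarrow> 'a) \<Rightarrow> ('a \<Rightarrow> 'a) \<Rightarrow> nat \<Rightarrow> 'a \<Rightarrow> 'a" where
  "phi_seq A beta alpha1 i = beta i \<circ> alpha_seq A beta alpha1 i"

end

theory Submission
  imports Defs
begin

lemma star_hom_comp:
  "star_hom A B f \<Longrightarrow> star_hom B C g \<Longrightarrow> star_hom A C (g \<circ> f)"
  unfolding star_hom_def by auto

lemma star_hom_id: "star_hom L L (\<lambda>x. x)"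
  unfolding star_hom_def by auto

lemma star_iso_inv:
  assumes "cstar_algebra A" "star_iso A B f"
  shows "star_hom B A (inv_into (cs_carrier A) f)"
proof -
  let ?g = "inv_into (cs_carrier A) f"
  have h: "star_hom A B f" and b: "bij_betw f (cs_carrier A) (cs_carrier B)"
    using assms(2) unfolding star_iso_def by auto
  have gin: "\<And>y. y \<in> cs_carrier B \<Longrightarrow> ?g y \<in> cs_carrier A"
    using b by (metis bij_betw_def inv_into_into)
  have fg: "\<And>y. y \<in> cs_carrier B \<Longrightarrow> f (?g y) = y"
    using b by (meson bij_betw_inv_into_right)
  have gf: "\<And>x. x \<in> cs_carrier A \<Longrightarrow> ?g (f x) = x"
    using b by (meson bij_betw_inv_into_left)
  have cl: "\<And>x y. x \<in> cs_carrier A \<Longrightarrow> y \<in> cs_carrier A \<Longrightarrow>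
      cs_add A x y \<in> cs_carrier A \<and> cs_mult A x y \<in> cs_carrier A"
      "\<And>x c. x \<in> cs_carrier A \<Longrightarrow> cs_scale A c x \<in> cs_carrier A"
      "\<And>x. x \<in> cs_carrier A \<Longrightarrow> cs_star A x \<in> cs_carrier A"
    using assms(1) unfolding cstar_algebra_def Let_def by simp_all
  have hh: "(\<forall>x\<in>cs_carrier A. \<forall>y\<in>cs_carrier A. f (cs_add A x y) = cs_add B (f x) (f y)) \<and>
    (\<forall>c. \<forall>x\<in>cs_carrier A. f (cs_scale A c x) = cs_scale B c (f x)) \<and>
    (\<forall>x\<in>cs_carrier A. \<forall>y\<in>cs_carrier A. f (cs_mult A x y) = cs_mult B (f x) (f y)) \<and>
    (\<forall>x\<in>cs_carrier A. f (cs_star A x) = cs_star B (f x))"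
    using h unfolding star_hom_def by blast
  show ?thesis
    unfolding star_hom_def
  proof (intro conjI ballI allI)
    fix x assume "x \<in> cs_carrier B" then show "?g x \<in> cs_carrier A" by (rule gin)
  next
    fix x y assume x: "x \<in> cs_carrier B" and y: "y \<in> cs_carrier B"
    have "cs_add B x y = f (cs_add A (?g x) (?g y))" using hh gin fg x y by simp
    then show "?g (cs_add B x y) = cs_add A (?g x) (?g y)" using gf cl gin x y by simp
  next
    fix c x assume x: "x \<in> cs_carrier B"
    have "cs_scale B c x = f (cs_scale A c (?g x))" using hh gin fg x by simp
    then show "?g (cs_scale B c x) = cs_scale A c (?g x)" using gf cl gin x by simp
  next
    fix x y assume x: "x \<in> cs_carrier B" and y: "y \<in> cs_carrier B"
    have "cs_mult B x y = f (cs_mult A (?g x) (?g y))" using hh gin fg x y by simp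
    then show "?g (cs_mult B x y) = cs_mult A (?g x) (?g y)" using gf cl gin x y by simp
  next
    fix x assume x: "x \<in> cs_carrier B"
    have "cs_star B x = f (cs_star A (?g x))" using hh gin fg x by simp
    then show "?g (cs_star B x) = cs_star A (?g x)" using gf cl gin x by simp
  qed
qed

theorem proposition4p1:
  fixes A :: "nat \<Rightarrow> 'a cstar"
    and alpha1 :: "'a \<Rightarrow> 'a"
    and beta :: "nat \<Rightarrow> 'a \<Rightarrow> 'a"
    and L :: "'b cstar"
    and psi :: "nat \<Rightarrow> 'a \<Rightarrow> 'b"
  assumes Acs: "\<And>i. cstar_algebra (A i)"
    and alpha1_hom: "star_hom (A 0) (A 0) alpha1"
    and beta_iso: "\<And>i. star_iso (A i) (A (Suc i)) (beta i)"
    and lim: "inductive_limit A (phi_seq A beta alpha1) L psi"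
  shows
    "(\<forall>i. \<forall>a\<in>cs_carrier (A i).
        phi_seq A beta alpha1 i a = alpha_seq A beta alpha1 (Suc i) (beta i a)) \<and>
     (\<forall>i. \<forall>a\<in>cs_carrier (A i).
        phi_seq A beta alpha1 i a = beta i (alpha_seq A beta alpha1 i a)) \<and>
     (\<forall>i. \<forall>a\<in>cs_carrier (A i).
        phi_seq A beta alpha1 i (alpha_seq A beta alpha1 i a)
          = alpha_seq A beta alpha1 (Suc i) (phi_seq A beta alpha1 i a)) \<and>
     (\<exists>alpha_inf beta_inf.
        star_hom L L alpha_inf \<and> star_hom L L beta_inf \<and>
        (\<forall>i. \<forall>a\<in>cs_carrier (A i). alpha_inf (psi i a) = psi i (alpha_seq A beta alpha1 i a)) \<and>
        (\<forall>i. \<forall>a\<in>cs_carrier (A i). beta_inf (psi i a) = psi (Suc i) (beta i a)) \<and>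
        (\<forall>f. star_hom L L f \<longrightarrow>
           (\<forall>i. \<forall>a\<in>cs_carrier (A i). f (psi i a) = psi i (alpha_seq A beta alpha1 i a)) \<longrightarrow>
           (\<forall>x\<in>cs_carrier L. f x = alpha_inf x)) \<and>
        (\<forall>f. star_hom L L f \<longrightarrow>
           (\<forall>i. \<forall>a\<in>cs_carrier (A i). f (psi i a) = psi (Suc i) (beta i a)) \<longrightarrow>
           (\<forall>x\<in>cs_carrier L. f x = beta_inf x)) \<and>
        (\<forall>x\<in>cs_carrier L. alpha_inf (beta_inf x) = x) \<and>
        (\<forall>x\<in>cs_carrier L. beta_inf (alpha_inf x) = x))"
proof -
  let ?al = "alpha_seq A beta alpha1"
  let ?ph = "phi_seq A beta alpha1"
  have bhom: "\<And>i. star_hom (A i) (A (Suc i)) (beta i)"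
    using beta_iso star_iso_def by blast
  have bbij: "\<And>i. bij_betw (beta i) (cs_carrier (A i)) (cs_carrier (A (Suc i)))"
    using beta_iso star_iso_def by blast
  have ahom: "\<And>i. star_hom (A i) (A i) (?al i)"
  proof -
    fix i show "star_hom (A i) (A i) (?al i)"
    proof (induction i)
      case 0 then show ?case using alpha1_hom by simp
    next
      case (Suc i)
      have "star_hom (A (Suc i)) (A (Suc i))
          ((beta i \<circ> ?al i) \<circ> inv_into (cs_carrier (A i)) (beta i))"
        by (rule star_hom_comp[OF star_iso_inv[OF Acs beta_iso] star_hom_comp[OF Suc bhom]])
      then show ?case by (simp add: comp_def)
    qed
  qed
  have ain: "?al i a \<in> cs_carrier (A i)" if "a \<in> cs_carrier (A i)" for i a
    using ahom[of i, unfolded star_hom_def] that by blast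
  have bin: "beta i a \<in> cs_carrier (A (Suc i))" if "a \<in> cs_carrier (A i)" for i a
    using bhom[of i, unfolded star_hom_def] that by blast
  have gf: "\<And>i x. x \<in> cs_carrier (A i) \<Longrightarrow> inv_into (cs_carrier (A i)) (beta i) (beta i x) = x"
    using bbij by (meson bij_betw_inv_into_left)
  have c1: "\<And>i a. a \<in> cs_carrier (A i) \<Longrightarrow> ?ph i a = ?al (Suc i) (beta i a)"
    using gf by (simp add: phi_seq_def)
  have c2: "\<And>i a. a \<in> cs_carrier (A i) \<Longrightarrow> ?ph i a = beta i (?al i a)"
    by (simp add: phi_seq_def)
  have c3: "?ph i (?al i a) = ?al (Suc i) (?ph i a)" if a: "a \<in> cs_carrier (A i)" for i a
    using c1[OF ain[OF a]] c2[OF a] c2[OF ain[OF a]] by simp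
  have lim': "cstar_algebra L \<and>
    (\<forall>i. star_hom (A i) L (psi i)) \<and>
    (\<forall>i. \<forall>a\<in>cs_carrier (A i). psi (Suc i) (?ph i a) = psi i a) \<and>
    (\<forall>(B :: 'b cstar) chi. cstar_algebra B \<longrightarrow> (\<forall>i. star_hom (A i) B (chi i)) \<longrightarrow>
       (\<forall>i. \<forall>a\<in>cs_carrier (A i). chi (Suc i) (?ph i a) = chi i a) \<longrightarrow>
       (\<exists>f. star_hom L B f \<and> (\<forall>i. \<forall>a\<in>cs_carrier (A i). f (psi i a) = chi i a)) \<and>
       (\<forall>f g. star_hom L B f \<longrightarrow> star_hom L B g \<longrightarrow>
          (\<forall>i. \<forall>a\<in>cs_carrier (A i). f (psi i a) = chi i a) \<longrightarrow>
          (\<forall>i. \<forall>a\<in>cs_carrier (A i). g (psi i a) = chi i a) \<longrightarrow>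
          (\<forall>x\<in>cs_carrier L. f x = g x)))"
    using lim unfolding inductive_limit_def .
  have Lcs: "cstar_algebra L" using lim' by (rule conjunct1)
  have psihom: "\<And>i. star_hom (A i) L (psi i)" using lim' by blast
  have psic: "\<And>i a. a \<in> cs_carrier (A i) \<Longrightarrow> psi (Suc i) (?ph i a) = psi i a"
    using lim' by blast
  have U0: "\<forall>(B :: 'b cstar) chi. cstar_algebra B \<longrightarrow> (\<forall>i. star_hom (A i) B (chi i)) \<longrightarrow>
       (\<forall>i. \<forall>a\<in>cs_carrier (A i). chi (Suc i) (?ph i a) = chi i a) \<longrightarrow>
       (\<exists>f. star_hom L B f \<and> (\<forall>i. \<forall>a\<in>cs_carrier (A i). f (psi i a) = chi i a)) \<and>
       (\<forall>f g. star_hom L B f \<longrightarrow> star_hom L B g \<longrightarrow>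
          (\<forall>i. \<forall>a\<in>cs_carrier (A i). f (psi i a) = chi i a) \<longrightarrow>
          (\<forall>i. \<forall>a\<in>cs_carrier (A i). g (psi i a) = chi i a) \<longrightarrow>
          (\<forall>x\<in>cs_carrier L. f x = g x))"
    using lim' by (rule conjunct2[THEN conjunct2, THEN conjunct2])
  have UP: "(\<exists>f. star_hom L L f \<and> (\<forall>i. \<forall>a\<in>cs_carrier (A i). f (psi i a) = chi i a)) \<and>
       (\<forall>f g. star_hom L L f \<longrightarrow> star_hom L L g \<longrightarrow>
          (\<forall>i. \<forall>a\<in>cs_carrier (A i). f (psi i a) = chi i a) \<longrightarrow>
          (\<forall>i. \<forall>a\<in>cs_carrier (A i). g (psi i a) = chi i a) \<longrightarrow>
          (\<forall>x\<in>cs_carrier L. f x = g x))"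
    if h1: "\<forall>i. star_hom (A i) L (chi i)"
      and h2: "\<forall>i. \<forall>a\<in>cs_carrier (A i). chi (Suc i) (?ph i a) = chi i a" for chi
  proof -
    have "cstar_algebra L \<longrightarrow> (\<forall>i. star_hom (A i) L (chi i)) \<longrightarrow>
       (\<forall>i. \<forall>a\<in>cs_carrier (A i). chi (Suc i) (?ph i a) = chi i a) \<longrightarrow>
       (\<exists>f. star_hom L L f \<and> (\<forall>i. \<forall>a\<in>cs_carrier (A i). f (psi i a) = chi i a)) \<and>
       (\<forall>f g. star_hom L L f \<longrightarrow> star_hom L L g \<longrightarrow>
          (\<forall>i. \<forall>a\<in>cs_carrier (A i). f (psi i a) = chi i a) \<longrightarrow>
          (\<forall>i. \<forall>a\<in>cs_carrier (A i). g (psi i a) = chi i a) \<longrightarrow>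
          (\<forall>x\<in>cs_carrier L. f x = g x))"
      by (rule U0[THEN spec[of _ L], THEN spec[of _ chi]])
    then show ?thesis using Lcs h1 h2 by (rule mp[THEN mp, THEN mp])
  qed
  define chiA where "chiA = (\<lambda>i. psi i \<circ> ?al i)"
  have chiA_hom: "\<forall>i. star_hom (A i) L (chiA i)"
    unfolding chiA_def using star_hom_comp[OF ahom psihom] by blast
  have chiA_c: "\<forall>i. \<forall>a\<in>cs_carrier (A i). chiA (Suc i) (?ph i a) = chiA i a"
  proof (intro allI ballI)
    fix i a assume a: "a \<in> cs_carrier (A i)"
    show "chiA (Suc i) (?ph i a) = chiA i a"
      unfolding chiA_def comp_apply
      by (simp only: c3[OF a, symmetric] psic[OF ain[OF a]])
  qed
  note UA = UP[OF chiA_hom chiA_c]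
  obtain ainf where ainf0: "star_hom L L ainf"
    "\<forall>i. \<forall>a\<in>cs_carrier (A i). ainf (psi i a) = chiA i a"
    using UA by blast
  have ainf: "star_hom L L ainf"
    "\<forall>i. \<forall>a\<in>cs_carrier (A i). ainf (psi i a) = psi i (?al i a)"
    using ainf0 unfolding chiA_def comp_apply by auto
  define chiB where "chiB = (\<lambda>i. psi (Suc i) \<circ> beta i)"
  have chiB_hom: "\<forall>i. star_hom (A i) L (chiB i)"
    unfolding chiB_def using star_hom_comp[OF bhom psihom] by blast
  have key: "?ph (Suc i) (beta i a) = beta (Suc i) (?ph i a)" if a: "a \<in> cs_carrier (A i)" for i a
    using c1[OF a] c2[OF bin[OF a]] by simp
  have chiB_c: "\<forall>i. \<forall>a\<in>cs_carrier (A i). chiB (Suc i) (?ph i a) = chiB i a"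
  proof (intro allI ballI)
    fix i a assume a: "a \<in> cs_carrier (A i)"
    show "chiB (Suc i) (?ph i a) = chiB i a"
      unfolding chiB_def comp_apply
      by (simp only: key[OF a, symmetric] psic[OF bin[OF a]])
  qed
  note UB = UP[OF chiB_hom chiB_c]
  obtain binf where binf0: "star_hom L L binf"
    "\<forall>i. \<forall>a\<in>cs_carrier (A i). binf (psi i a) = chiB i a"
    using UB by blast
  have binf: "star_hom L L binf"
    "\<forall>i. \<forall>a\<in>cs_carrier (A i). binf (psi i a) = psi (Suc i) (beta i a)"
    using binf0 unfolding chiB_def comp_apply by auto
  have UI0: "\<forall>i. star_hom (A i) L (psi i)" using psihom by blast
  have UI1: "\<forall>i. \<forall>a\<in>cs_carrier (A i). psi (Suc i) (?ph i a) = psi i a" using psic by blast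
  have UI: "\<forall>f g. star_hom L L f \<longrightarrow> star_hom L L g \<longrightarrow>
          (\<forall>i. \<forall>a\<in>cs_carrier (A i). f (psi i a) = psi i a) \<longrightarrow>
          (\<forall>i. \<forall>a\<in>cs_carrier (A i). g (psi i a) = psi i a) \<longrightarrow>
          (\<forall>x\<in>cs_carrier L. f x = g x)"
    using UP[OF UI0 UI1] by (rule conjunct2)
  have idc: "\<forall>i. \<forall>a\<in>cs_carrier (A i). (\<lambda>x. x) (psi i a) = psi i a" by simp
  have ab: "\<forall>x\<in>cs_carrier L. ainf (binf x) = x"
  proof -
    have h1: "star_hom L L (ainf \<circ> binf)" using star_hom_comp ainf binf by blast
    have h2: "\<forall>i. \<forall>a\<in>cs_carrier (A i). (ainf \<circ> binf) (psi i a) = psi i a"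
    proof (intro allI ballI)
      fix i a assume a: "a \<in> cs_carrier (A i)"
      have "(ainf \<circ> binf) (psi i a) = psi (Suc i) (?al (Suc i) (beta i a))"
        using ainf(2) binf(2) bin[OF a] a by simp
      also have "\<dots> = psi (Suc i) (?ph i a)" using c1[OF a] by simp
      also have "\<dots> = psi i a" using psic[OF a] .
      finally show "(ainf \<circ> binf) (psi i a) = psi i a" .
    qed
    have "\<forall>x\<in>cs_carrier L. (ainf \<circ> binf) x = (\<lambda>x. x) x"
      using UI h1 star_hom_id[of L] h2 idc by blast
    then show ?thesis by simp
  qed
  have ba: "\<forall>x\<in>cs_carrier L. binf (ainf x) = x"
  proof -
    have h1: "star_hom L L (binf \<circ> ainf)" using star_hom_comp ainf binf by blast
    have h2: "\<forall>i. \<forall>a\<in>cs_carrier (A i). (binf \<circ> ainf) (psi i a) = psi i a"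
    proof (intro allI ballI)
      fix i a assume a: "a \<in> cs_carrier (A i)"
      have "(binf \<circ> ainf) (psi i a) = psi (Suc i) (beta i (?al i a))"
        using ainf(2) binf(2) ain[OF a] a by simp
      also have "\<dots> = psi (Suc i) (?ph i a)" using c2[OF a] by simp
      also have "\<dots> = psi i a" using psic[OF a] .
      finally show "(binf \<circ> ainf) (psi i a) = psi i a" .
    qed
    have "\<forall>x\<in>cs_carrier L. (binf \<circ> ainf) x = (\<lambda>x. x) x"
      using UI h1 star_hom_id[of L] h2 idc by blast
    then show ?thesis by simp
  qed
  have uA: "\<forall>f. star_hom L L f \<longrightarrow>
           (\<forall>i. \<forall>a\<in>cs_carrier (A i). f (psi i a) = psi i (?al i a)) \<longrightarrow>
           (\<forall>x\<in>cs_carrier L. f x = ainf x)"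
  proof (intro allI impI)
    fix f assume f: "star_hom L L f"
      and fc: "\<forall>i. \<forall>a\<in>cs_carrier (A i). f (psi i a) = psi i (?al i a)"
    have fc': "\<forall>i. \<forall>a\<in>cs_carrier (A i). f (psi i a) = chiA i a"
      using fc unfolding chiA_def by simp
    show "\<forall>x\<in>cs_carrier L. f x = ainf x"
      using conjunct2[OF UA] f ainf0 fc' by blast
  qed
  have uB: "\<forall>f. star_hom L L f \<longrightarrow>
           (\<forall>i. \<forall>a\<in>cs_carrier (A i). f (psi i a) = psi (Suc i) (beta i a)) \<longrightarrow>
           (\<forall>x\<in>cs_carrier L. f x = binf x)"
  proof (intro allI impI)
    fix f assume f: "star_hom L L f"
      and fc: "\<forall>i. \<forall>a\<in>cs_carrier (A i). f (psi i a) = psi (Suc i) (beta i a)"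
    have fc': "\<forall>i. \<forall>a\<in>cs_carrier (A i). f (psi i a) = chiB i a"
      using fc unfolding chiB_def by simp
    show "\<forall>x\<in>cs_carrier L. f x = binf x"
      using conjunct2[OF UB] f binf0 fc' by blast
  qed
  have c1': "\<forall>i. \<forall>a\<in>cs_carrier (A i). ?ph i a = ?al (Suc i) (beta i a)" using c1 by blast
  have c2': "\<forall>i. \<forall>a\<in>cs_carrier (A i). ?ph i a = beta i (?al i a)" using c2 by blast
  have c3': "\<forall>i. \<forall>a\<in>cs_carrier (A i). ?ph i (?al i a) = ?al (Suc i) (?ph i a)" using c3 by blast
  show ?thesis
    using c1' c2' c3' ainf(1) binf(1) ainf(2) binf(2) uA uB ab ba by (intro conjI exI)
qed

end
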